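(* Let $G_0$ be a fixed $n\times l$ binary matrix, $G_1$ a fixed $n\times k$ binary matrix, $\mathbf m\in\{0,1\}^k$ fixed, and $1\le u\le n$. Then $$P(E=0\mid U=u)\le \min\left\{\frac{\sum_{w=d_0}^{u} B_{0,w}\binom{n-w}{u-w}}{\binom{n}{u}},\;1\right\}.$$
   Context: All arithmetic is over $\mathrm{GF}(2)$. $\mathcal C_0^{\perp}=\{\mathbf x\in\{0,1\}^n: G_0^T\mathbf x=\mathbf 0\}$; $B_{0,w}$ is the number of vectors of Hamming weight $w$ in $\mathcal C_0^\perp$, and $d_0$ is the minimum Hamming weight of a nonzero vector of $\mathcal C_0^\perp$ (empty sums are $0$). Defect model: each of the $n$ memory cells is independently defective with probability $\beta\in(0,1)$; a defective cell is stuck at $0$ or at $1$, each with probability $1/2$, independently. Let $\mathcal U$ be the set of defect positions, $U=|\mathcal U|$, $\mathbf s^{\mathcal U}$ the vector of stuck-at values; conditionally on $U=u$, $\mathcal U$ is a uniform random $u$-subset and $\mathbf s^{\mathcal U}$ is uniform on $\{0,1\}^u$. For a matrix $M$ (resp. vector $\mathbf v$) with rows indexed by $\{1,\dots,n\}$, $M^{\mathcal U}$ (resp. $\mathbf v^{\mathcal U}$) denotes the rows indexed by $\mathcal U$. Encoding: with $\mathbf b^{\mathcal U}=(G_1\mathbf m)^{\mathcal U}+\mathbf s^{\mathcal U}$, look for $\mathbf d\in\{0,1\}^l$ with $G_0^{\mathcal U}\mathbf d=\mathbf b^{\mathcal U}$; $E=1$ if such $\mathbf d$ exists and $E=0$ (encoding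 failure) otherwise. *)

theory Defs
  imports Complex_Main "HOL-Library.Z2" "HOL-Library.FuncSet"
begin

text \<open>Binary vectors/matrices: entries in GF(2) = type bit. An n x l matrix is a function
  nat => nat => bit, indices 0..<n (rows) and 0..<l (columns).\<close>

definition hweight :: "nat \<Rightarrow> (nat \<Rightarrow> bit) \<Rightarrow> nat" where
  "hweight n x = card {i. i < n \<and> x i \<noteq> 0}"

definition dual_code :: "nat \<Rightarrow> nat \<Rightarrow> (nat \<Rightarrow> nat \<Rightarrow> bit) \<Rightarrow> (nat \<Rightarrow> bit) set" where
  "dual_code n l G0 = {x \<in> {0..<n} \<rightarrow>\<^sub>E UNIV. \<forall>j<l. (\<Sum>i<n. G0 i j * x i) = 0}"

definition B0 :: "nat \<Rightarrow> nat \<Rightarrow> (nat \<Rightarrow> nat \<Rightarrow> bit) \<Rightarrow> nat \<Rightarrow> nat" where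
  "B0 n l G0 w = card {x \<in> dual_code n l G0. hweight n x = w}"

text \<open>Minimum distance d0; convention d0 = n+1 if the dual code has no nonzero vector
  (so that the sum from d0 to u <= n is empty, i.e. 0).\<close>
definition d0 :: "nat \<Rightarrow> nat \<Rightarrow> (nat \<Rightarrow> nat \<Rightarrow> bit) \<Rightarrow> nat" where
  "d0 n l G0 = (if \<exists>x\<in>dual_code n l G0. hweight n x > 0
      then Min {hweight n x | x. x \<in> dual_code n l G0 \<and> hweight n x > 0} else n + 1)"

text \<open>Outcomes given U = u: a u-subset S of the n cells (0-indexed) and stuck-at values
  s in {0,1}^S; all outcomes equally likely.\<close>
definition defect_outcomes :: "nat \<Rightarrow> nat \<Rightarrow> (nat set \<times> (nat \<Rightarrow> bit)) set" where
  "defect_outcomes n u = {(S, s). S \<subseteq> {0..<n} \<and> card S = u \<and> s \<in> S \<rightarrow>\<^sub>E UNIV}"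

definition encodable ::
  "nat \<Rightarrow> nat \<Rightarrow> (nat \<Rightarrow> nat \<Rightarrow> bit) \<Rightarrow> (nat \<Rightarrow> nat \<Rightarrow> bit) \<Rightarrow> (nat \<Rightarrow> bit)
    \<Rightarrow> nat set \<Rightarrow> (nat \<Rightarrow> bit) \<Rightarrow> bool" where
  "encodable l k G0 G1 m S s =
     (\<exists>d \<in> {0..<l} \<rightarrow>\<^sub>E UNIV. \<forall>i\<in>S. (\<Sum>j<l. G0 i j * d j) = (\<Sum>j<k. G1 i j * m j) + s i)"

definition fail_prob ::
  "nat \<Rightarrow> nat \<Rightarrow> nat \<Rightarrow> (nat \<Rightarrow> nat \<Rightarrow> bit) \<Rightarrow> (nat \<Rightarrow> nat \<Rightarrow> bit) \<Rightarrow> (nat \<Rightarrow> bit)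
    \<Rightarrow> nat \<Rightarrow> real" where
  "fail_prob n l k G0 G1 m u =
     real (card {(S, s) \<in> defect_outcomes n u. \<not> encodable l k G0 G1 m S s})
       / real (card (defect_outcomes n u))"

end

theory Submission imports Defs begin
declare add_bit_eq_xor[simp del] mult_bit_eq_and[simp del]

lemma bit_cases2: "(P (0::bit)) \<Longrightarrow> P 1 \<Longrightarrow> P x" by (cases x) auto

lemma H1: fixes A A' g R br bi :: bit
  shows "A' = A + g * R \<Longrightarrow> A' = bi + g * br \<Longrightarrow> A + g*(br + R) = bi"
  by (cases A; cases A'; cases g; cases R; cases br; cases bi) auto
lemma H2: fixes A br :: bit shows "A + 1 * (br + A) = br"
  by (cases A; cases br) auto
lemma H3: fixes X :: bit shows "X * 1 + X = 0" by (cases X) auto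
lemma H4: fixes X Y g :: bit shows "Y + X * g = 0 \<Longrightarrow> X * g + Y = 0"
  by (simp add: add.commute)
lemma H5: fixes X Y g :: bit shows "Y + X * g = 1 \<Longrightarrow> X * g + Y = 1"
  by (simp add: add.commute)

lemma fredholm:
  fixes G :: "nat \<Rightarrow> nat \<Rightarrow> bit" and b :: "nat \<Rightarrow> bit"
  assumes "finite S"
  shows "(\<exists>d. \<forall>i\<in>S. (\<Sum>j<l. G i j * d j) = b i) \<or>
         (\<exists>x. (\<forall>j<l. (\<Sum>i\<in>S. x i * G i j) = 0) \<and> (\<Sum>i\<in>S. x i * b i) = 1)"
  using assms
proof (induction l arbitrary: S G b)
  case 0
  show ?case
  proof (cases "\<forall>i\<in>S. b i = 0")
    case True then show ?thesis by auto
  next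
    case False then obtain r where r: "r\<in>S" "b r = 1" by auto
    have "(\<Sum>i\<in>S. (if i = r then 1 else 0) * b i) = b r"
    proof -
      have "(\<Sum>i\<in>S. (if i = r then 1 else 0) * b i) = (\<Sum>i\<in>S. if i = r then b i else 0)"
        by (rule sum.cong) auto
      then show ?thesis using r(1) 0 by simp
    qed
    then show ?thesis using r by (intro disjI2 exI[of _ "\<lambda>i. if i = r then 1 else 0"]) auto
  qed
next
  case (Suc l)
  show ?case
  proof (cases "\<exists>r\<in>S. G r l = 1")
    case False
    then have z: "\<forall>i\<in>S. G i l = 0" by auto
    from Suc.IH[OF Suc.prems, of G b] show ?thesis
    proof
      assume "\<exists>d. \<forall>i\<in>S. (\<Sum>j<l. G i j * d j) = b i"
      then obtain d where "\<forall>i\<in>S. (\<Sum>j<l. G i j * d j) = b i" by blast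
      then show ?thesis using z by (intro disjI1 exI[of _ d]) auto
    next
      assume "\<exists>x. (\<forall>j<l. (\<Sum>i\<in>S. x i * G i j) = 0) \<and> (\<Sum>i\<in>S. x i * b i) = 1"
      then obtain x where x: "\<forall>j<l. (\<Sum>i\<in>S. x i * G i j) = 0" "(\<Sum>i\<in>S. x i * b i) = 1" by blast
      have "\<forall>j<Suc l. (\<Sum>i\<in>S. x i * G i j) = 0"
      proof (intro allI impI)
        fix j assume "j < Suc l"
        then consider "j < l" | "j = l" by linarith
        then show "(\<Sum>i\<in>S. x i * G i j) = 0"
          by cases (use x z in auto)
      qed
      then show ?thesis using x by blast
    qed
  next
    case True
    then obtain r where r: "r \<in> S" "G r l = 1" by blast
    define S' where "S' = S - {r}"
    define G' where "G' = (\<lambda>i j. G i j + G i l * G r j)"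
    define b' where "b' = (\<lambda>i. b i + G i l * b r)"
    have fS': "finite S'" using Suc.prems S'_def by auto
    have SS: "S = insert r S'" "r \<notin> S'" using r S'_def by auto
    from Suc.IH[OF fS', of G' b'] show ?thesis
    proof
      assume "\<exists>d. \<forall>i\<in>S'. (\<Sum>j<l. G' i j * d j) = b' i"
      then obtain d' where d': "\<forall>i\<in>S'. (\<Sum>j<l. G' i j * d' j) = b' i" by blast
      define R where "R = (\<Sum>j<l. G r j * d' j)"
      define d where "d = d'(l := b r + R)"
      have sd: "(\<Sum>j<Suc l. G i j * d j) = (\<Sum>j<l. G i j * d' j) + G i l * (b r + R)" for i
        by (simp add: d_def)
      have "\<forall>i\<in>S. (\<Sum>j<Suc l. G i j * d j) = b i"
      proof
        fix i assume "i \<in> S"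
        show "(\<Sum>j<Suc l. G i j * d j) = b i"
        proof (cases "i = r")
          case True then show ?thesis using sd[of r] r by (simp add: R_def H2)
        next
          case False
          then have iS': "i \<in> S'" using \<open>i\<in>S\<close> S'_def by auto
          have e1: "(\<Sum>j<l. G' i j * d' j) = (\<Sum>j<l. G i j * d' j) + G i l * R"
            by (simp add: G'_def R_def distrib_right sum.distrib sum_distrib_left mult.assoc)
          have e2: "(\<Sum>j<l. G' i j * d' j) = b i + G i l * b r" using d' iS' b'_def by auto
          show ?thesis unfolding sd by (rule H1[OF e1 e2])
        qed
      qed
      then show ?thesis by blast
    next
      assume "\<exists>x. (\<forall>j<l. (\<Sum>i\<in>S'. x i * G' i j) = 0) \<and> (\<Sum>i\<in>S'. x i * b' i) = 1"
      then obtain x' where x': "\<forall>j<l. (\<Sum>i\<in>S'. x' i * G' i j) = 0" "(\<Sum>i\<in>S'. x' i * b' i) = 1" by blast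
      define X where "X = (\<Sum>i\<in>S'. x' i * G i l)"
      define x where "x = x'(r := X)"
      have sx: "(\<Sum>i\<in>S. x i * f i) = X * f r + (\<Sum>i\<in>S'. x' i * f i)" for f
      proof -
        have "(\<Sum>i\<in>S'. x i * f i) = (\<Sum>i\<in>S'. x' i * f i)"
          using SS(2) by (intro sum.cong) (auto simp: x_def)
        then show ?thesis using SS fS' by (simp add: x_def)
      qed
      have "\<forall>j<Suc l. (\<Sum>i\<in>S. x i * G i j) = 0"
      proof (intro allI impI)
        fix j assume "j < Suc l"
        then consider "j < l" | "j = l" by linarith
        then show "(\<Sum>i\<in>S. x i * G i j) = 0"
        proof cases
          case 1
          have "(\<Sum>i\<in>S'. x' i * G' i j) = (\<Sum>i\<in>S'. x' i * G i j) + X * G r j"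
            by (simp add: G'_def X_def distrib_left sum.distrib sum_distrib_right mult.assoc)
          then have "(\<Sum>i\<in>S'. x' i * G i j) + X * G r j = 0" using x' 1 by simp
          then show ?thesis unfolding sx by (rule H4)
        next
          case 2
          show ?thesis unfolding sx 2 r(2) X_def[symmetric] by (rule H3)
        qed
      qed
      moreover have "(\<Sum>i\<in>S. x i * b i) = 1"
      proof -
        have "(\<Sum>i\<in>S'. x' i * b' i) = (\<Sum>i\<in>S'. x' i * b i) + X * b r"
          by (simp add: b'_def X_def distrib_left sum.distrib sum_distrib_right mult.assoc)
        then have "(\<Sum>i\<in>S'. x' i * b i) + X * b r = 1" using x' by simp
        then show ?thesis unfolding sx by (rule H5)
      qed
      ultimately show ?thesis by blast
    qed
  qed
qed

lemma card_bit_UNIV: "card (UNIV :: bit set) = 2"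
proof -
  have "(UNIV :: bit set) = {0, 1}" by (auto intro: bit.exhaust)
  moreover have "card {0::bit, 1} = 2" by (simp add: card_insert_if)
  ultimately show ?thesis by simp
qed

lemma finite_bit_UNIV: "finite (UNIV :: bit set)"
proof -
  have "(UNIV :: bit set) = {0, 1}" by (auto intro: bit.exhaust)
  moreover have "finite {0::bit, 1}" by simp
  ultimately show ?thesis by metis
qed

lemma card_sigma_pie:
  assumes "finite T" "\<forall>S\<in>T. finite S \<and> card S = u"
  shows "card {(S, s). S \<in> T \<and> s \<in> S \<rightarrow>\<^sub>E (UNIV::bit set)} = card T * 2 ^ u"
proof -
  have eq: "{(S, s). S \<in> T \<and> s \<in> S \<rightarrow>\<^sub>E (UNIV::bit set)} = (SIGMA S:T. S \<rightarrow>\<^sub>E (UNIV::bit set))"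
    by auto
  have "\<forall>S\<in>T. finite (S \<rightarrow>\<^sub>E (UNIV::bit set))" using assms by (auto intro: finite_PiE simp: finite_bit_UNIV)
  then have "card (SIGMA S:T. S \<rightarrow>\<^sub>E (UNIV::bit set)) = (\<Sum>S\<in>T. card (S \<rightarrow>\<^sub>E (UNIV::bit set)))"
    using assms(1) by simp
  also have "\<dots> = (\<Sum>S\<in>T. 2 ^ u)"
    using assms by (intro sum.cong) (auto simp: card_PiE card_bit_UNIV)
  finally show ?thesis using eq by simp
qed

lemma card_supersets:
  assumes "finite A" "T \<subseteq> A" "card T \<le> u"
  shows "card {S. T \<subseteq> S \<and> S \<subseteq> A \<and> card S = u} = (card A - card T) choose (u - card T)"
proof -
  have fT: "finite T" using assms finite_subset by blast
  have "bij_betw (\<lambda>S. S - T) {S. T \<subseteq> S \<and> S \<subseteq> A \<and> card S = u} {B. B \<subseteq> A - T \<and> card B = u - card T}"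
  proof (rule bij_betw_byWitness[where f' = "\<lambda>B. B \<union> T"])
    show "\<forall>a\<in>{S. T \<subseteq> S \<and> S \<subseteq> A \<and> card S = u}. (a - T) \<union> T = a" by auto
    show "\<forall>a'\<in>{B. B \<subseteq> A - T \<and> card B = u - card T}. (a' \<union> T) - T = a'" by auto
    show "(\<lambda>S. S - T) ` {S. T \<subseteq> S \<and> S \<subseteq> A \<and> card S = u} \<subseteq> {B. B \<subseteq> A - T \<and> card B = u - card T}"
      using fT by (auto simp: card_Diff_subset)
    show "(\<lambda>B. B \<union> T) ` {B. B \<subseteq> A - T \<and> card B = u - card T} \<subseteq> {S. T \<subseteq> S \<and> S \<subseteq> A \<and> card S = u}"
    proof (rule image_subsetI)
      fix B assume "B \<in> {B. B \<subseteq> A - T \<and> card B = u - card T}"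
      then have "B \<subseteq> A - T" "card B = u - card T" by auto
      moreover have "finite B" using \<open>B \<subseteq> A - T\<close> assms(1) finite_subset by blast
      moreover have "B \<inter> T = {}" using \<open>B \<subseteq> A - T\<close> by auto
      ultimately show "B \<union> T \<in> {S. T \<subseteq> S \<and> S \<subseteq> A \<and> card S = u}"
        using fT assms by (auto simp: card_Un_disjoint)
    qed
  qed
  then have "card {S. T \<subseteq> S \<and> S \<subseteq> A \<and> card S = u} = card {B. B \<subseteq> A - T \<and> card B = u - card T}"
    by (rule bij_betw_same_card)
  also have "\<dots> = card (A - T) choose (u - card T)"
    using assms(1) by (intro n_subsets) auto
  also have "card (A - T) = card A - card T" using fT assms by (simp add: card_Diff_subset)
  finally show ?thesis .
qed

theorem lemma1:
  fixes n l k u :: nat and G0 G1 :: "nat \<Rightarrow> nat \<Rightarrow> bit" and m :: "nat \<Rightarrow> bit"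
  assumes "1 \<le> u" and "u \<le> n"
  shows "fail_prob n l k G0 G1 m u \<le>
    min ((\<Sum>w = d0 n l G0..u. real (B0 n l G0 w) * real ((n - w) choose (u - w)))
           / real (n choose u)) 1"
proof -
  define D where "D = defect_outcomes n u"
  define F where "F = {(S, s) \<in> D. \<not> encodable l k G0 G1 m S s}"
  define C where "C = dual_code n l G0"
  define C' where "C' = {c \<in> C. 0 < hweight n c \<and> hweight n c \<le> u}"
  define supp where "supp = (\<lambda>c::nat\<Rightarrow>bit. {i. i < n \<and> c i \<noteq> 0})"
  define A where "A = (\<lambda>c. {(S, s) \<in> D. supp c \<subseteq> S})"
  define f where "f = (\<lambda>w. (n - w) choose (u - w))"
  have hw: "hweight n c = card (supp c)" for c by (simp add: hweight_def supp_def)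
  have fsupp: "finite (supp c)" for c by (simp add: supp_def)
  have fC: "finite C" unfolding C_def dual_code_def
    by (rule finite_subset[OF _ finite_PiE[of "{0..<n}" "\<lambda>_. UNIV"]]) (auto simp: finite_bit_UNIV)
  have fC': "finite C'" using fC C'_def by auto
  have Dsig: "D = {(S, s). S \<in> {S. S \<subseteq> {0..<n} \<and> card S = u} \<and> s \<in> S \<rightarrow>\<^sub>E (UNIV::bit set)}"
    by (auto simp: D_def defect_outcomes_def)
  have fD: "finite D"
  proof -
    have "D = (SIGMA S:{S. S \<subseteq> {0..<n} \<and> card S = u}. S \<rightarrow>\<^sub>E (UNIV::bit set))"
      unfolding Dsig by auto
    moreover have "finite (SIGMA S:{S. S \<subseteq> {0..<n} \<and> card S = u}. S \<rightarrow>\<^sub>E (UNIV::bit set))"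
      by (intro finite_SigmaI finite_PiE) (auto simp: finite_bit_UNIV intro: finite_subset)
    ultimately show ?thesis by simp
  qed
  have cardD: "card D = (n choose u) * 2 ^ u"
  proof -
    have "finite {S. S \<subseteq> {0..<n} \<and> card S = u}" by auto
    moreover have "\<forall>S\<in>{S. S \<subseteq> {0..<n} \<and> card S = u}. finite S \<and> card S = u"
      using finite_subset by auto
    ultimately have "card D = card {S. S \<subseteq> {0..<n} \<and> card S = u} * 2 ^ u"
      unfolding Dsig by (rule card_sigma_pie)
    also have "card {S. S \<subseteq> {0..<n} \<and> card S = u} = n choose u"
      using n_subsets[of "{0..<n}" u] by simp
    finally show ?thesis .
  qed
  have cardA: "card (A c) = f (hweight n c) * 2 ^ u" if "c \<in> C'" for c
  proof -
    have s1: "supp c \<subseteq> {0..<n}" by (auto simp: supp_def)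
    have s2: "card (supp c) \<le> u" using that hw C'_def by auto
    have Asig: "A c = {(S, s). S \<in> {S. supp c \<subseteq> S \<and> S \<subseteq> {0..<n} \<and> card S = u} \<and> s \<in> S \<rightarrow>\<^sub>E (UNIV::bit set)}"
      by (auto simp: A_def D_def defect_outcomes_def)
    have "finite {S. supp c \<subseteq> S \<and> S \<subseteq> {0..<n} \<and> card S = u}" by auto
    moreover have "\<forall>S\<in>{S. supp c \<subseteq> S \<and> S \<subseteq> {0..<n} \<and> card S = u}. finite S \<and> card S = u"
      using finite_subset by auto
    ultimately have "card (A c) = card {S. supp c \<subseteq> S \<and> S \<subseteq> {0..<n} \<and> card S = u} * 2 ^ u"
      unfolding Asig by (rule card_sigma_pie)
    also have "card {S. supp c \<subseteq> S \<and> S \<subseteq> {0..<n} \<and> card S = u} = f (hweight n c)"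
      using card_supersets[OF _ s1 s2] by (simp add: f_def hw)
    finally show ?thesis .
  qed
  have FU: "F \<subseteq> (\<Union>c\<in>C'. A c)"
  proof
    fix p assume "p \<in> F"
    then obtain S s where p: "p = (S, s)" and SD: "(S, s) \<in> D" and ne: "\<not> encodable l k G0 G1 m S s"
      unfolding F_def by auto
    have Sn: "S \<subseteq> {0..<n}" and cS: "card S = u" using SD by (auto simp: D_def defect_outcomes_def)
    have fS: "finite S" using Sn finite_subset by auto
    define b where "b = (\<lambda>i. (\<Sum>j<k. G1 i j * m j) + s i)"
    from fredholm[OF fS, where l=l and G=G0 and b=b] show "p \<in> (\<Union>c\<in>C'. A c)"
    proof
      assume "\<exists>d. \<forall>i\<in>S. (\<Sum>j<l. G0 i j * d j) = b i"
      then obtain d where d: "\<forall>i\<in>S. (\<Sum>j<l. G0 i j * d j) = b i" by blast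
      have "restrict d {0..<l} \<in> {0..<l} \<rightarrow>\<^sub>E UNIV" by simp
      moreover have "\<forall>i\<in>S. (\<Sum>j<l. G0 i j * restrict d {0..<l} j) = (\<Sum>j<k. G1 i j * m j) + s i"
      proof
        fix i assume "i \<in> S"
        have "(\<Sum>j<l. G0 i j * restrict d {0..<l} j) = (\<Sum>j<l. G0 i j * d j)"
          by (intro sum.cong) auto
        then show "(\<Sum>j<l. G0 i j * restrict d {0..<l} j) = (\<Sum>j<k. G1 i j * m j) + s i"
          using d \<open>i\<in>S\<close> b_def by simp
      qed
      ultimately have "encodable l k G0 G1 m S s" unfolding encodable_def by blast
      with ne show ?thesis by blast
    next
      assume "\<exists>x. (\<forall>j<l. (\<Sum>i\<in>S. x i * G0 i j) = 0) \<and> (\<Sum>i\<in>S. x i * b i) = 1"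
      then obtain x where x: "\<forall>j<l. (\<Sum>i\<in>S. x i * G0 i j) = 0" "(\<Sum>i\<in>S. x i * b i) = 1" by blast
      define c where "c = restrict (\<lambda>i. if i \<in> S then x i else 0) {0..<n}"
      have cS': "c i = x i" if "i \<in> S" for i using that Sn by (auto simp: c_def)
      have cE: "c \<in> {0..<n} \<rightarrow>\<^sub>E UNIV" by (simp add: c_def)
      have "\<forall>j<l. (\<Sum>i<n. G0 i j * c i) = 0"
      proof (intro allI impI)
        fix j assume "j < l"
        have "(\<Sum>i<n. G0 i j * c i) = (\<Sum>i\<in>S. G0 i j * c i)"
          using Sn by (intro sum.mono_neutral_right) (auto simp: c_def)
        also have "\<dots> = (\<Sum>i\<in>S. x i * G0 i j)"
          by (intro sum.cong) (auto simp: cS' mult.commute)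
        finally show "(\<Sum>i<n. G0 i j * c i) = 0" using x \<open>j<l\<close> by simp
      qed
      then have cC: "c \<in> C" using cE by (simp add: C_def dual_code_def)
      have suppS: "supp c \<subseteq> S" by (auto simp: supp_def c_def split: if_splits)
      obtain i where i: "i \<in> S" "x i \<noteq> 0"
      proof (rule ccontr)
        assume "\<not> thesis"
        then have "\<forall>i\<in>S. x i = 0" using that by blast
        then have "(\<Sum>i\<in>S. x i * b i) = 0" by simp
        with x show False by simp
      qed
      have "i \<in> supp c" using i Sn cS' by (auto simp: supp_def)
      then have "0 < hweight n c" using hw fsupp by (metis card_gt_0_iff empty_iff)
      moreover have "hweight n c \<le> u" using hw suppS cS fS card_mono by metis
      ultimately have "c \<in> C'" using cC C'_def by auto
      moreover have "p \<in> A c" using p SD suppS by (simp add: A_def)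
      ultimately show ?thesis by blast
    qed
  qed
  have cardF: "card F \<le> (\<Sum>c\<in>C'. f (hweight n c)) * 2 ^ u"
  proof -
    have fU: "finite (\<Union>c\<in>C'. A c)" using fD by (rule finite_subset[rotated]) (auto simp: A_def)
    have "card F \<le> card (\<Union>c\<in>C'. A c)" using FU fU card_mono by blast
    also have "\<dots> \<le> (\<Sum>c\<in>C'. card (A c))" using fC' by (rule card_UN_le)
    also have "\<dots> = (\<Sum>c\<in>C'. f (hweight n c) * 2 ^ u)" by (intro sum.cong) (auto simp: cardA)
    finally show ?thesis by (simp add: sum_distrib_right)
  qed
  define M where "M = {hweight n x | x. x \<in> dual_code n l G0 \<and> hweight n x > 0}"
  have fM: "finite M" unfolding M_def using fC C_def by simp
  have d0pos: "1 \<le> d0 n l G0"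
  proof (cases "\<exists>x\<in>dual_code n l G0. hweight n x > 0")
    case True
    then have "M \<noteq> {}" by (auto simp: M_def)
    then have "Min M \<in> M" using fM Min_in by blast
    then have "0 < Min M" by (auto simp: M_def)
    then show ?thesis using True by (simp add: d0_def M_def[symmetric])
  next
    case False then show ?thesis by (simp add: d0_def)
  qed
  have d0le: "d0 n l G0 \<le> hweight n c" if "c \<in> C'" for c
  proof -
    have cM: "hweight n c \<in> M" using that by (auto simp: M_def C'_def C_def)
    have ex: "\<exists>x\<in>dual_code n l G0. hweight n x > 0" using that by (auto simp: C'_def C_def)
    have "d0 n l G0 = Min M" using ex by (simp add: d0_def M_def)
    then show ?thesis using Min_le[OF fM cM] by simp
  qed
  have sumeq: "(\<Sum>c\<in>C'. f (hweight n c)) = (\<Sum>w = d0 n l G0..u. B0 n l G0 w * f w)"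
  proof -
    have "(\<Sum>c\<in>C'. f (hweight n c)) = (\<Sum>w = d0 n l G0..u. \<Sum>c\<in>{c \<in> C'. hweight n c = w}. f (hweight n c))"
      using fC' d0le C'_def by (intro sum.group[symmetric]) auto
    also have "\<dots> = (\<Sum>w = d0 n l G0..u. B0 n l G0 w * f w)"
    proof (intro sum.cong refl)
      fix w assume w: "w \<in> {d0 n l G0..u}"
      have "{c \<in> C'. hweight n c = w} = {x \<in> dual_code n l G0. hweight n x = w}"
        using w d0pos by (auto simp: C'_def C_def)
      then show "(\<Sum>c\<in>{c \<in> C'. hweight n c = w}. f (hweight n c)) = B0 n l G0 w * f w"
        by (simp add: B0_def)
    qed
    finally show ?thesis .
  qed
  have FD: "F \<subseteq> D" by (auto simp: F_def)
  have pos: "0 < n choose u" using assms by simp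
  have fp: "fail_prob n l k G0 G1 m u = real (card F) / real (card D)"
    by (simp add: fail_prob_def F_def D_def)
  have le1: "real (card F) / real (card D) \<le> 1"
  proof -
    have "real (card F) \<le> real (card D)" using card_mono[OF fD FD] by simp
    moreover have "0 < real (card D)" using cardD pos by simp
    ultimately show ?thesis by (simp only: divide_le_eq_1_pos)
  qed
  define Sn where "Sn = (\<Sum>w = d0 n l G0..u. B0 n l G0 w * f w)"
  have c1: "card F \<le> Sn * 2 ^ u" using cardF sumeq Sn_def by simp
  have c2: "real (card F) \<le> real Sn * 2 ^ u"
  proof -
    have "real (card F) \<le> real (Sn * 2 ^ u)" using c1 by (simp only: of_nat_le_iff)
    then show ?thesis by simp
  qed
  have rD: "real (card D) = real (n choose u) * 2 ^ u" using cardD by simp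
  have rp: "0 < real (n choose u)" using pos by simp
  have le2: "real (card F) / real (card D) \<le> real Sn / real (n choose u)"
    unfolding rD using c2 rp by (simp add: field_simps)
  have rS: "real Sn = (\<Sum>w = d0 n l G0..u. real (B0 n l G0 w) * real ((n - w) choose (u - w)))"
    by (simp add: Sn_def f_def)
  show ?thesis using le1 le2 fp rS by simp
qed
end
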